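(* Let $\varepsilon>0$, $\alpha=\varepsilon/(2M)$, $\lambda=2\alpha/(\alpha+\sqrt{\alpha^2+4L\alpha})$, and $y_0\in\mathrm{dom}\, h$. Run TAA: $s_0=\nabla f(y_0)$, $x_0=\mathrm{argmin}_x\{\langle s_0,x\rangle+h^\alpha(x)\}$, and for $k\ge0$: $\tilde x_{k+1}=(1-\lambda)y_k+\lambda x_k$, $s_{k+1}=(1-\lambda)s_k+\lambda\nabla f(\tilde x_{k+1})$, $x_{k+1}=\mathrm{argmin}_x\{\langle s_{k+1},x\rangle+h^\alpha(x)\}$, $y_{k+1}=(1-\lambda)y_k+\lambda x_{k+1}$. Let $\Gamma_k$ be the ACP model induced by $(y_0,\{\tilde x_{i+1}\}_{i=0}^{k-1},(\lambda,\dots,\lambda))$. Then $(y_k,\Gamma_k)$ is an $\varepsilon$-certificate for $\min_x\phi(x)$ after $k=\tilde{\mathcal{O}}(1+\sqrt{ML/\varepsilon})$ iterations.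
   Context: Let $\|\cdot\|$ be a norm on $\mathbb{R}^n$ with dual norm $\|\cdot\|_*$. Let $f:\mathbb{R}^n\to\mathbb{R}$ be convex, differentiable and $L$-smooth ($L>0$) with respect to $\|\cdot\|$, $h:\mathbb{R}^n\to(-\infty,\infty]$ closed proper convex with bounded domain, and $w:\mathbb{R}^n\to[0,+\infty]$ closed, $1$-strongly convex with respect to $\|\cdot\|$ on $\mathrm{dom}\, h$, with $M:=\max_{x\in\mathrm{dom}\, h}w(x)<\infty$. Let $\phi=f+h$, $h^\alpha=h+\alpha w$, $\phi^\alpha=f+h^\alpha$. Write $\ell_f(x;x_0)=f(x_0)+\langle\nabla f(x_0),x-x_0\rangle$. The ACP model induced by $(y_0,\{p_i\}_{i=0}^{k-1},\zeta)$, $\zeta\in[0,1]^k$, is defined by $\Gamma_0(x)=h^\alpha(x)+\ell_f(x;y_0)$, $\Gamma_{j+1}(x)=(1-\zeta_j)\Gamma_j(x)+\zeta_j(h^\alpha(x)+\ell_f(x;p_j))$. For $u\in\mathrm{dom}\, h$ and $\alpha\le\varepsilon/(2M)$, $(u,\Gamma_k)$ is an $\varepsilon$-certificate if $\phi^\alpha(u)-\min_{x\in\mathbb{R}^n}\Gamma_k(x)\le\varepsilon/2$. The notation $\tilde{\mathcal{O}}$ hides logarithmic factors (in $\varepsilon$ and the initial gap). *)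

theory Defs
  imports "HOL-Analysis.Analysis" "HOL-Library.Extended_Real"
begin

definition edom :: "('a \<Rightarrow> ereal) \<Rightarrow> 'a set" where
  "edom g = {x. g x < \<infinity>}"

definition is_norm :: "('a::real_vector \<Rightarrow> real) \<Rightarrow> bool" where
  "is_norm N \<longleftrightarrow> (\<forall>x. 0 \<le> N x) \<and> (\<forall>x. N x = 0 \<longleftrightarrow> x = 0)
     \<and> (\<forall>c x. N (c *\<^sub>R x) = \<bar>c\<bar> * N x) \<and> (\<forall>x y. N (x + y) \<le> N x + N y)"

definition dual_norm :: "('a::real_inner \<Rightarrow> real) \<Rightarrow> 'a \<Rightarrow> real" where
  "dual_norm N s = Sup {s \<bullet> x | x. N x \<le> 1}"

definition L_smooth_wrt :: "('a::real_inner \<Rightarrow> real) \<Rightarrow> real \<Rightarrow> ('a \<Rightarrow> 'a) \<Rightarrow> bool" where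
  "L_smooth_wrt N L G \<longleftrightarrow> (\<forall>x y. dual_norm N (G x - G y) \<le> L * N (x - y))"

definition econvex :: "('a::real_vector \<Rightarrow> ereal) \<Rightarrow> bool" where
  "econvex g \<longleftrightarrow> (\<forall>x y t. 0 \<le> t \<and> t \<le> 1 \<longrightarrow>
      g ((1 - t) *\<^sub>R x + t *\<^sub>R y) \<le> ereal (1 - t) * g x + ereal t * g y)"

definition eproper :: "('a \<Rightarrow> ereal) \<Rightarrow> bool" where
  "eproper g \<longleftrightarrow> (\<forall>x. g x \<noteq> -\<infinity>) \<and> (\<exists>x. g x < \<infinity>)"

definition eclosed :: "('a::topological_space \<Rightarrow> ereal) \<Rightarrow> bool" where
  "eclosed g \<longleftrightarrow> closed {(x, t::real). g x \<le> ereal t}"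

definition strongly_convex_wrt_on :: "'a set \<Rightarrow> ('a::real_vector \<Rightarrow> real) \<Rightarrow> ('a \<Rightarrow> ereal) \<Rightarrow> bool" where
  "strongly_convex_wrt_on D N w \<longleftrightarrow> (\<forall>x\<in>D. \<forall>y\<in>D. \<forall>t. 0 \<le> t \<and> t \<le> 1 \<longrightarrow>
      w ((1 - t) *\<^sub>R x + t *\<^sub>R y) + ereal (t * (1 - t) / 2 * (N (x - y))\<^sup>2)
        \<le> ereal (1 - t) * w x + ereal t * w y)"

definition halpha :: "('a \<Rightarrow> ereal) \<Rightarrow> ('a \<Rightarrow> ereal) \<Rightarrow> real \<Rightarrow> 'a \<Rightarrow> ereal" where
  "halpha h w \<alpha> x = h x + ereal \<alpha> * w x"

definition phialpha :: "('a \<Rightarrow> real) \<Rightarrow> ('a \<Rightarrow> ereal) \<Rightarrow> ('a \<Rightarrow> ereal) \<Rightarrow> real \<Rightarrow> 'a \<Rightarrow> ereal" where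
  "phialpha f h w \<alpha> x = ereal (f x) + halpha h w \<alpha> x"

definition lin :: "('a::real_inner \<Rightarrow> real) \<Rightarrow> ('a \<Rightarrow> 'a) \<Rightarrow> 'a \<Rightarrow> 'a \<Rightarrow> real" where
  "lin f G x0 x = f x0 + G x0 \<bullet> (x - x0)"

text \<open>argmin_x { <s,x> + H x } (unique in the setting of the theorem).\<close>
definition lin_argmin :: "('a::real_inner \<Rightarrow> ereal) \<Rightarrow> 'a \<Rightarrow> 'a" where
  "lin_argmin H s = (SOME x. \<forall>z. ereal (s \<bullet> x) + H x \<le> ereal (s \<bullet> z) + H z)"

text \<open>TAA iterates: taa ... k = (xtilde_k, s_k, x_k, y_k); xtilde_0 is unused (set to y_0).\<close>
primrec taa :: "('a::real_inner \<Rightarrow> ereal) \<Rightarrow> ('a \<Rightarrow> 'a) \<Rightarrow> real \<Rightarrow> 'a \<Rightarrow> nat \<Rightarrow> 'a \<times> 'a \<times> 'a \<times> 'a" where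
  "taa H G lam y0 0 = (y0, G y0, lin_argmin H (G y0), y0)"
| "taa H G lam y0 (Suc k) =
     (let (xt, s, x, y) = taa H G lam y0 k;
          xt' = (1 - lam) *\<^sub>R y + lam *\<^sub>R x;
          s' = (1 - lam) *\<^sub>R s + lam *\<^sub>R G xt';
          x' = lin_argmin H s';
          y' = (1 - lam) *\<^sub>R y + lam *\<^sub>R x'
      in (xt', s', x', y'))"

primrec acp :: "('a::real_inner \<Rightarrow> ereal) \<Rightarrow> ('a \<Rightarrow> real) \<Rightarrow> ('a \<Rightarrow> 'a) \<Rightarrow> 'a \<Rightarrow> (nat \<Rightarrow> 'a)
                 \<Rightarrow> (nat \<Rightarrow> real) \<Rightarrow> nat \<Rightarrow> 'a \<Rightarrow> ereal" where
  "acp H f G y0 p \<zeta> 0 x = H x + ereal (lin f G y0 x)"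
| "acp H f G y0 p \<zeta> (Suc j) x =
     ereal (1 - \<zeta> j) * acp H f G y0 p \<zeta> j x + ereal (\<zeta> j) * (H x + ereal (lin f G (p j) x))"

definition eps_certificate ::
  "('a \<Rightarrow> real) \<Rightarrow> ('a \<Rightarrow> ereal) \<Rightarrow> ('a \<Rightarrow> ereal) \<Rightarrow> real \<Rightarrow> real \<Rightarrow> real \<Rightarrow> 'a \<Rightarrow> ('a \<Rightarrow> ereal) \<Rightarrow> bool" where
  "eps_certificate f h w M \<alpha> \<epsilon> u \<Gamma> \<longleftrightarrow>
     u \<in> edom h \<and> \<alpha> \<le> \<epsilon> / (2 * M) \<and>
     phialpha f h w \<alpha> u - (INF x. \<Gamma> x) \<le> ereal (\<epsilon> / 2)"

end

theory Submission
  imports Defs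
begin


lemma isn_scale: "is_norm N \<Longrightarrow> N (c *\<^sub>R x) = \<bar>c\<bar> * N x"
  unfolding is_norm_def by blast
lemma isn_nonneg: "is_norm N \<Longrightarrow> 0 \<le> N x"
  unfolding is_norm_def by blast
lemma isn_zero: "is_norm N \<Longrightarrow> N 0 = 0"
  unfolding is_norm_def by blast
lemma isn_tri: "is_norm N \<Longrightarrow> N (x + y) \<le> N x + N y"
  unfolding is_norm_def by blast
lemma isn_commute: "is_norm N \<Longrightarrow> N (x - y) = N (y - x)"
  using isn_scale[of N "-1" "y - x"] by simp
lemma isn_sum: assumes N: "is_norm N" shows "finite S \<Longrightarrow> N (sum g S) \<le> (\<Sum>i\<in>S. N (g i))"
proof (induction S rule: finite_induct)
  case empty then show ?case by (simp add: isn_zero[OF N])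
next
  case (insert a S)
  then show ?case using isn_tri[OF N, of "g a" "sum g S"] by simp
qed

lemma isn_upper:
  fixes N :: "'a::euclidean_space \<Rightarrow> real"
  assumes "is_norm N"
  shows "N x \<le> (\<Sum>b\<in>Basis. N b) * norm x"
proof -
  have "N x = N (\<Sum>b\<in>Basis. (x \<bullet> b) *\<^sub>R b)" by (simp add: euclidean_representation)
  also have "\<dots> \<le> (\<Sum>b\<in>Basis. N ((x \<bullet> b) *\<^sub>R b))" by (rule isn_sum[OF assms]) simp
  also have "\<dots> = (\<Sum>b\<in>Basis. \<bar>x \<bullet> b\<bar> * N b)" using isn_scale[OF assms] by simp
  also have "\<dots> \<le> (\<Sum>b\<in>Basis. norm x * N b)"
    by (intro sum_mono mult_right_mono Basis_le_norm isn_nonneg[OF assms]) auto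
  finally show ?thesis by (simp add: sum_distrib_left mult.commute)
qed

lemma isn_lip:
  fixes N :: "'a::euclidean_space \<Rightarrow> real"
  assumes "is_norm N"
  shows "\<bar>N x - N y\<bar> \<le> (\<Sum>b\<in>Basis. N b) * norm (x - y)"
proof -
  have "N x \<le> N y + N (x - y)" using isn_tri[OF assms, of y "x - y"] by simp
  moreover have "N y \<le> N x + N (y - x)" using isn_tri[OF assms, of x "y - x"] by simp
  moreover have "N (y - x) = N (x - y)" using isn_commute[OF assms] by simp
  ultimately show ?thesis using isn_upper[OF assms, of "x - y"] by linarith
qed

lemma isn_cont:
  fixes N :: "'a::euclidean_space \<Rightarrow> real"
  assumes "is_norm N"
  shows "continuous_on S N"
proof -
  define K where "K = (\<Sum>b\<in>Basis. N b)"
  have K0: "K \<ge> 0" unfolding K_def by (intro sum_nonneg isn_nonneg[OF assms])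
  show ?thesis unfolding continuous_on_iff
  proof (intro ballI allI impI)
    fix x e assume "x \<in> S" "(e::real) > 0"
    show "\<exists>d>0. \<forall>x'\<in>S. dist x' x < d \<longrightarrow> dist (N x') (N x) < e"
    proof (intro exI[of _ "e / (K + 1)"] conjI ballI impI)
      show "e / (K + 1) > 0" using \<open>e > 0\<close> K0 by simp
      fix x' assume "dist x' x < e / (K + 1)"
      hence "norm (x' - x) * (K + 1) < e" using K0 by (simp add: dist_norm field_simps)
      moreover have "\<bar>N x' - N x\<bar> \<le> K * norm (x' - x)" using isn_lip[OF assms] K_def by simp
      moreover have "K * norm (x' - x) \<le> norm (x' - x) * (K + 1)" by (simp add: algebra_simps)
      ultimately show "dist (N x') (N x) < e" by (simp add: dist_real_def)
    qed
  qed
qed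

lemma isn_lower:
  fixes N :: "'a::euclidean_space \<Rightarrow> real"
  assumes "is_norm N"
  shows "\<exists>c>0. \<forall>x. c * norm x \<le> N x"
proof -
  obtain b :: 'a where b: "b \<in> Basis" using nonempty_Basis by blast
  have ne: "sphere (0::'a) 1 \<noteq> {}" using b by (auto simp: sphere_def intro!: exI[of _ b])
  obtain z where z: "z \<in> sphere 0 1" "\<forall>y\<in>sphere 0 1. N z \<le> N y"
    using continuous_attains_inf[OF compact_sphere ne isn_cont[OF assms]] by blast
  have "z \<noteq> 0" using z by auto
  hence Nz: "N z > 0" using assms unfolding is_norm_def by (metis less_eq_real_def)
  show ?thesis
  proof (intro exI[of _ "N z"] conjI allI)
    fix x :: 'a
    show "N z * norm x \<le> N x"
    proof (cases "x = 0")
      case True then show ?thesis by (simp add: isn_zero[OF assms])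
    next
      case False
      hence "(1 / norm x) *\<^sub>R x \<in> sphere 0 1" by simp
      hence "N z \<le> N ((1 / norm x) *\<^sub>R x)" using z by blast
      also have "\<dots> = N x / norm x" using isn_scale[OF assms] by simp
      finally show ?thesis using False by (simp add: field_simps)
    qed
  qed (rule Nz)
qed

lemma dual_ineq:
  fixes N :: "'a::euclidean_space \<Rightarrow> real"
  assumes "is_norm N"
  shows "s \<bullet> v \<le> dual_norm N s * N v"
proof -
  obtain c where c: "c > 0" "\<And>x. c * norm x \<le> N x" using isn_lower[OF assms] by blast
  let ?S = "{s \<bullet> x | x. N x \<le> 1}"
  have bdd: "bdd_above ?S"
  proof (rule bdd_aboveI)
    fix y assume "y \<in> ?S"
    then obtain x where x: "y = s \<bullet> x" "N x \<le> 1" by blast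
    have "c * norm x \<le> 1" using c(2)[of x] x(2) by linarith
    hence "norm x \<le> 1 / c" using c(1) by (simp add: field_simps)
    hence "norm s * norm x \<le> norm s * (1 / c)" by (intro mult_left_mono) auto
    moreover have "s \<bullet> x \<le> norm s * norm x" by (rule norm_cauchy_schwarz)
    ultimately show "y \<le> norm s / c" using x by simp
  qed
  have mem: "\<And>x. N x \<le> 1 \<Longrightarrow> s \<bullet> x \<le> dual_norm N s"
    unfolding dual_norm_def by (rule cSup_upper[OF _ bdd]) blast
  show ?thesis
  proof (cases "v = 0")
    case True
    then show ?thesis using mem[of 0] by (simp add: isn_zero[OF assms])
  next
    case False
    hence Nv: "N v > 0" using assms unfolding is_norm_def by (metis less_eq_real_def)
    have "N ((1 / N v) *\<^sub>R v) = 1" using isn_scale[OF assms] Nv by simp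
    hence "s \<bullet> ((1 / N v) *\<^sub>R v) \<le> dual_norm N s" using mem by (metis order_refl)
    hence "(s \<bullet> v) / N v \<le> dual_norm N s" by simp
    then show ?thesis using Nv by (simp add: field_simps)
  qed
qed

lemma smooth_ineq:
  fixes N :: "'a::euclidean_space \<Rightarrow> real"
  assumes "is_norm N" "L_smooth_wrt N L G"
  shows "(G a - G b) \<bullet> v \<le> L * N (a - b) * N v"
proof -
  have "(G a - G b) \<bullet> v \<le> dual_norm N (G a - G b) * N v" by (rule dual_ineq[OF assms(1)])
  also have "\<dots> \<le> L * N (a - b) * N v"
    using assms(2) unfolding L_smooth_wrt_def by (intro mult_right_mono isn_nonneg[OF assms(1)]) auto
  finally show ?thesis .
qed




lemma line_deriv:
  fixes f :: "'a::euclidean_space \<Rightarrow> real"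
  assumes df: "\<forall>x. (f has_derivative (\<lambda>v. G x \<bullet> v)) (at x)"
  shows "((\<lambda>t. f (x + t *\<^sub>R d)) has_real_derivative (G (x + t *\<^sub>R d) \<bullet> d)) (at t within A)"
proof -
  have l: "((\<lambda>t. x + t *\<^sub>R d) has_derivative (\<lambda>u. u *\<^sub>R d)) (at t within A)"
    by (auto intro!: derivative_eq_intros)
  have "((f \<circ> (\<lambda>t. x + t *\<^sub>R d)) has_derivative (\<lambda>u. G (x + t *\<^sub>R d) \<bullet> (u *\<^sub>R d))) (at t within A)"
    unfolding o_def using has_derivative_compose[OF l] df by blast
  then show ?thesis
    by (intro has_derivative_imp_has_field_derivative) (auto simp: o_def algebra_simps)
qed

lemma descent:
  fixes f :: "'a::euclidean_space \<Rightarrow> real"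
  assumes N: "is_norm N" and sm: "L_smooth_wrt N L G" and L: "L \<ge> 0"
    and df: "\<forall>x. (f has_derivative (\<lambda>v. G x \<bullet> v)) (at x)"
  shows "f y \<le> f x + G x \<bullet> (y - x) + L / 2 * (N (y - x))\<^sup>2"
proof -
  define d where "d = y - x"
  define g where "g t = f (x + t *\<^sub>R d) - t * (G x \<bullet> d) - L / 2 * t\<^sup>2 * (N d)\<^sup>2" for t
  have "g 1 \<le> g 0"
  proof (rule DERIV_nonpos_imp_nonincreasing[of 0 1 g])
    fix t :: real assume t: "0 \<le> t" "t \<le> 1"
    have D: "(g has_real_derivative (G (x + t *\<^sub>R d) \<bullet> d - G x \<bullet> d - L * t * (N d)\<^sup>2)) (at t)"
      unfolding g_def
      by (rule derivative_eq_intros line_deriv[OF df] | simp)+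
    have "(G (x + t *\<^sub>R d) - G x) \<bullet> d \<le> L * N ((x + t *\<^sub>R d) - x) * N d"
      by (rule smooth_ineq[OF N sm])
    also have "\<dots> = L * t * (N d)\<^sup>2" using isn_scale[OF N, of t d] t by (simp add: power2_eq_square)
    finally have "G (x + t *\<^sub>R d) \<bullet> d - G x \<bullet> d - L * t * (N d)\<^sup>2 \<le> 0"
      by (simp add: inner_diff_left)
    then show "\<exists>y. DERIV g t :> y \<and> y \<le> 0" using D by blast
  qed simp
  then show ?thesis unfolding g_def d_def by simp
qed

lemma tangent:
  fixes f :: "'a::euclidean_space \<Rightarrow> real"
  assumes cv: "convex_on UNIV f"
    and df: "\<forall>x. (f has_derivative (\<lambda>v. G x \<bullet> v)) (at x)"
  shows "f x + G x \<bullet> (y - x) \<le> f y"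
proof -
  define d where "d = y - x"
  define g where "g t = f (x + t *\<^sub>R d)" for t
  have cg: "convex_on UNIV g"
  proof (rule convex_onI)
    fix a t u :: real assume a: "0 < a" "a < 1"
    have eq: "x + ((1 - a) *\<^sub>R t + a *\<^sub>R u) *\<^sub>R d = (1 - a) *\<^sub>R (x + t *\<^sub>R d) + a *\<^sub>R (x + u *\<^sub>R d)"
      by (simp add: algebra_simps)
    show "g ((1 - a) *\<^sub>R t + a *\<^sub>R u) \<le> (1 - a) * g t + a * g u"
      unfolding g_def eq using convex_onD[OF cv, of a "x + t *\<^sub>R d" "x + u *\<^sub>R d"] a by simp
  qed simp
  have "g 1 - g 0 \<ge> (G (x + 0 *\<^sub>R d) \<bullet> d) * (1 - 0)"
  proof (rule convex_on_imp_above_tangent[OF cg])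
    show "(g has_real_derivative G (x + 0 *\<^sub>R d) \<bullet> d) (at 0 within UNIV)"
      unfolding g_def by (rule line_deriv[OF df])
  qed auto
  then show ?thesis unfolding g_def d_def by simp
qed




locale setting =
  fixes N :: "'a::euclidean_space \<Rightarrow> real" and f :: "'a \<Rightarrow> real" and G :: "'a \<Rightarrow> 'a"
    and h :: "'a \<Rightarrow> ereal" and w :: "'a \<Rightarrow> ereal" and L M \<alpha> :: real and y0 :: 'a
  assumes N: "is_norm N" and cvx: "convex_on UNIV f"
    and df: "\<forall>x. (f has_derivative (\<lambda>v. G x \<bullet> v)) (at x)"
    and Lpos: "L > 0" and sm: "L_smooth_wrt N L G"
    and hcl: "eclosed h" and hpr: "eproper h" and hcv: "econvex h" and hbd: "bounded (edom h)"
    and w0: "\<forall>x. 0 \<le> w x" and wcl: "eclosed w" and wsc: "strongly_convex_wrt_on (edom h) N w"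
    and wM: "\<forall>x\<in>edom h. w x \<le> ereal M" and apos: "\<alpha> > 0" and y0: "y0 \<in> edom h"
begin

abbreviation "D \<equiv> edom h"
definition "hr x = real_of_ereal (h x)"
definition "wr x = real_of_ereal (w x)"
definition "Hr x = hr x + \<alpha> * wr x"
abbreviation "H \<equiv> halpha h w \<alpha>"

lemma hD: "x \<in> D \<Longrightarrow> h x = ereal (hr x)"
  using hpr unfolding edom_def eproper_def hr_def by (cases "h x") auto

lemma hout: "x \<notin> D \<Longrightarrow> h x = \<infinity>"
  unfolding edom_def by auto

lemma wD: "x \<in> D \<Longrightarrow> w x = ereal (wr x)"
  using wM w0 unfolding wr_def by (cases "w x") auto

lemma wr_bounds: "x \<in> D \<Longrightarrow> 0 \<le> wr x \<and> wr x \<le> M"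
  using wM w0 wD by (metis ereal_less_eq(3) ereal_less_eq(5) zero_ereal_def)

lemma HD: "x \<in> D \<Longrightarrow> H x = ereal (Hr x)"
  unfolding halpha_def Hr_def using hD wD by simp

lemma Hout: "x \<notin> D \<Longrightarrow> H x = \<infinity>"
proof -
  assume x: "x \<notin> D"
  have "0 \<le> w x" using w0 by blast
  hence "0 \<le> ereal \<alpha> * w x" using apos by (cases "w x") auto
  hence "ereal \<alpha> * w x \<noteq> -\<infinity>" by auto
  then show ?thesis unfolding halpha_def using hout[OF x] by simp
qed

lemma comb_D:
  assumes x: "x \<in> D" and y: "y \<in> D" and t: "0 \<le> t" "t \<le> 1"
  shows "(1 - t) *\<^sub>R x + t *\<^sub>R y \<in> D"
    and "hr ((1 - t) *\<^sub>R x + t *\<^sub>R y) \<le> (1 - t) * hr x + t * hr y"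
proof -
  have "h ((1 - t) *\<^sub>R x + t *\<^sub>R y) \<le> ereal (1 - t) * h x + ereal t * h y"
    using hcv t unfolding econvex_def by blast
  also have "\<dots> = ereal ((1 - t) * hr x + t * hr y)" using hD[OF x] hD[OF y] by simp
  finally have le: "h ((1 - t) *\<^sub>R x + t *\<^sub>R y) \<le> ereal ((1 - t) * hr x + t * hr y)" .
  then show m: "(1 - t) *\<^sub>R x + t *\<^sub>R y \<in> D" unfolding edom_def
    using le_less_trans by fastforce
  show "hr ((1 - t) *\<^sub>R x + t *\<^sub>R y) \<le> (1 - t) * hr x + t * hr y"
    using le hD[OF m] by simp
qed

lemma Hr_sc:
  assumes x: "x \<in> D" and y: "y \<in> D" and t: "0 \<le> t" "t \<le> 1"
  shows "Hr ((1 - t) *\<^sub>R x + t *\<^sub>R y) + \<alpha> * (t * (1 - t) / 2 * (N (x - y))\<^sup>2)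
     \<le> (1 - t) * Hr x + t * Hr y"
proof -
  let ?m = "(1 - t) *\<^sub>R x + t *\<^sub>R y"
  have m: "?m \<in> D" by (rule comb_D[OF x y t])
  have "w ?m + ereal (t * (1 - t) / 2 * (N (x - y))\<^sup>2) \<le> ereal (1 - t) * w x + ereal t * w y"
    using wsc x y t unfolding strongly_convex_wrt_on_def by blast
  hence "wr ?m + t * (1 - t) / 2 * (N (x - y))\<^sup>2 \<le> (1 - t) * wr x + t * wr y"
    using wD[OF x] wD[OF y] wD[OF m] by simp
  hence "\<alpha> * (wr ?m + t * (1 - t) / 2 * (N (x - y))\<^sup>2) \<le> \<alpha> * ((1 - t) * wr x + t * wr y)"
    using apos by (intro mult_left_mono) auto
  moreover have "hr ?m \<le> (1 - t) * hr x + t * hr y" by (rule comb_D[OF x y t])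
  ultimately show ?thesis unfolding Hr_def by (simp add: algebra_simps)
qed

lemma epi_lim:
  assumes cl: "eclosed g" and mem: "\<And>n. g (z n) \<le> ereal (u n)"
    and lz: "z \<longlonglongrightarrow> l" and lu: "u \<longlonglongrightarrow> v"
  shows "g l \<le> ereal v"
proof -
  have "(l, v) \<in> {(x, t::real). g x \<le> ereal t}"
    by (rule Lim_in_closed_set[OF cl[unfolded eclosed_def], of "\<lambda>n. (z n, u n)"])
       (use mem tendsto_Pair[OF lz lu] in auto)
  then show ?thesis by simp
qed

lemma hr_lb: "\<exists>B. \<forall>x\<in>D. B \<le> hr x"
proof (rule ccontr)
  assume "\<not> ?thesis"
  hence "\<forall>n::nat. \<exists>x\<in>D. hr x < - real n" by (meson not_le)
  then obtain z where z: "\<And>n. z n \<in> D" "\<And>n. hr (z n) < - real n" by metis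
  have "bounded (range z)" using z(1) by (intro bounded_subset[OF hbd]) auto
  then obtain l r where r: "strict_mono r" "(z \<circ> r) \<longlonglongrightarrow> l"
    using bounded_imp_convergent_subsequence by blast
  have "h l \<le> ereal t" for t
  proof -
    obtain n0 :: nat where n0: "- t \<le> real n0" using real_arch_simple by blast
    have "h ((z \<circ> r) (n + n0)) \<le> ereal t" for n
    proof -
      have "real n0 \<le> real (r (n + n0))" using seq_suble[OF r(1), of "n + n0"] by simp
      hence "hr (z (r (n + n0))) \<le> t" using z(2)[of "r (n + n0)"] n0 by linarith
      then show ?thesis using hD[OF z(1)] by simp
    qed
    moreover have "(\<lambda>n. (z \<circ> r) (n + n0)) \<longlonglongrightarrow> l" using r(2) by (rule LIMSEQ_ignore_initial_segment)
    ultimately show ?thesis using epi_lim[OF hcl, of "\<lambda>n. (z \<circ> r) (n + n0)" "\<lambda>_. t"] by auto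
  qed
  hence "h l = -\<infinity>" by (rule ereal_bot)
  then show False using hpr unfolding eproper_def by blast
qed

lemma argmin_ex: "\<exists>x\<in>D. \<forall>z\<in>D. s \<bullet> x + Hr x \<le> s \<bullet> z + Hr z"
proof -
  define g where "g z = s \<bullet> z + Hr z" for z
  obtain B where B: "\<And>x. x \<in> D \<Longrightarrow> B \<le> hr x" using hr_lb by blast
  obtain R where R: "\<And>x. x \<in> D \<Longrightarrow> norm x \<le> R" using hbd unfolding bounded_iff by blast
  have sz: "\<bar>s \<bullet> z\<bar> \<le> norm s * R" if "z \<in> D" for z
    using Cauchy_Schwarz_ineq2[of s z] R[OF that] by (meson mult_left_mono norm_ge_zero order_trans)
  have glb: "- (norm s * R) + B \<le> g z" if "z \<in> D" for z
    using sz[OF that] B[OF that] wr_bounds[OF that] apos unfolding g_def Hr_def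
    by (smt (verit) mult_nonneg_nonneg)
  define V where "V = Inf (g ` D)"
  have bb: "bdd_below (g ` D)" using glb by (intro bdd_belowI2) 
  have Vle: "V \<le> g z" if "z \<in> D" for z unfolding V_def using bb that by (simp add: cInf_lower)
  have "\<exists>z\<in>D. g z < V + inverse (real (Suc n))" for n
  proof -
    have "Inf (g ` D) < V + inverse (real (Suc n))" unfolding V_def by simp
    then show ?thesis using cInf_lessD[of "g ` D"] y0 by blast
  qed
  then obtain z where z: "\<And>n. z n \<in> D" "\<And>n. g (z n) < V + inverse (real (Suc n))" by metis
  define U where "U = V + 1 + norm s * R"
  have hrU: "hr (z n) \<le> U" for n
  proof -
    have "inverse (real (Suc n)) \<le> 1" by (simp add: inverse_le_1_iff)
    then show ?thesis using z[of n] sz[OF z(1)[of n]] wr_bounds[OF z(1)[of n]] apos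
      unfolding g_def Hr_def U_def by (smt (verit) mult_nonneg_nonneg)
  qed
  define T where "T n = (z n, hr (z n), wr (z n))" for n
  have "range T \<subseteq> D \<times> ({B..U} \<times> {0..M})"
    using z(1) B hrU wr_bounds unfolding T_def by auto
  hence "bounded (range T)"
    by (rule bounded_subset[rotated]) (intro bounded_Times hbd bounded_closed_interval)
  then obtain lt r where r: "strict_mono r" "(T \<circ> r) \<longlonglongrightarrow> lt"
    using bounded_imp_convergent_subsequence by blast
  obtain l u v where lt: "lt = (l, u, v)" by (cases lt) auto
  have lz: "(\<lambda>n. z (r n)) \<longlonglongrightarrow> l" using tendsto_fst[OF r(2)] unfolding lt T_def o_def by simp
  have lu: "(\<lambda>n. hr (z (r n))) \<longlonglongrightarrow> u" using tendsto_fst[OF tendsto_snd[OF r(2)]] unfolding lt T_def o_def by simp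
  have lv: "(\<lambda>n. wr (z (r n))) \<longlonglongrightarrow> v" using tendsto_snd[OF tendsto_snd[OF r(2)]] unfolding lt T_def o_def by simp
  have hl: "h l \<le> ereal u" by (rule epi_lim[OF hcl _ lz lu]) (use hD z(1) in simp)
  have wl: "w l \<le> ereal v" by (rule epi_lim[OF wcl _ lz lv]) (use wD z(1) in simp)
  have lD: "l \<in> D" using le_less_trans[OF hl, of \<infinity>] unfolding edom_def by simp
  have g1: "(\<lambda>n. g (z (r n))) \<longlonglongrightarrow> s \<bullet> l + (u + \<alpha> * v)"
    unfolding g_def Hr_def by (intro tendsto_intros lz lu lv)
  have g2: "(\<lambda>n. g (z (r n))) \<longlonglongrightarrow> V"
  proof (rule tendsto_sandwich[of "\<lambda>_. V" _ _ "\<lambda>n. V + inverse (real (Suc n))"])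
    show "\<forall>\<^sub>F n in sequentially. V \<le> g (z (r n))" using Vle z(1) by simp
    show "\<forall>\<^sub>F n in sequentially. g (z (r n)) \<le> V + inverse (real (Suc n))"
    proof (intro always_eventually allI)
      fix n
      have "n \<le> r n" by (rule seq_suble[OF r(1)])
      hence "inverse (real (Suc (r n))) \<le> inverse (real (Suc n))"
        by (intro le_imp_inverse_le) auto
      then show "g (z (r n)) \<le> V + inverse (real (Suc n))" using z(2)[of "r n"] by linarith
    qed
    show "(\<lambda>n. V + inverse (real (Suc n))) \<longlonglongrightarrow> V"
      using tendsto_add[OF tendsto_const LIMSEQ_inverse_real_of_nat, of V] by simp
  qed simp
  have eqV: "s \<bullet> l + (u + \<alpha> * v) = V" using LIMSEQ_unique[OF g1 g2] .
  have "hr l \<le> u" using hl hD[OF lD] by simp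
  moreover have "wr l \<le> v" using wl wD[OF lD] by simp
  ultimately have "g l \<le> V" unfolding g_def Hr_def using eqV apos
    by (smt (verit) mult_left_mono)
  then show ?thesis using lD Vle unfolding g_def by (meson order_trans)
qed

lemma growth:
  assumes x: "x \<in> D" and min: "\<And>z. z \<in> D \<Longrightarrow> Hr x + s \<bullet> x \<le> Hr z + s \<bullet> z" and z: "z \<in> D"
  shows "Hr x + s \<bullet> x + \<alpha> / 2 * (N (z - x))\<^sup>2 \<le> Hr z + s \<bullet> z"
proof -
  define Q where "Q = \<alpha> / 2 * (N (z - x))\<^sup>2"
  define R where "R = Hr z + s \<bullet> z - (Hr x + s \<bullet> x)"
  have Q0: "Q \<ge> 0" unfolding Q_def using apos by simp
  have key: "(1 - t) * Q \<le> R" if t: "0 < t" "t < 1" for t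
  proof -
    let ?m = "(1 - t) *\<^sub>R x + t *\<^sub>R z"
    have m: "?m \<in> D" using comb_D[OF x z] t by simp
    have sc: "Hr ?m + \<alpha> * (t * (1 - t) / 2 * (N (x - z))\<^sup>2) \<le> (1 - t) * Hr x + t * Hr z"
      using Hr_sc[OF x z] t by simp
    have lin: "s \<bullet> ?m = (1 - t) * (s \<bullet> x) + t * (s \<bullet> z)" by (simp add: inner_simps)
    have "Hr x + s \<bullet> x \<le> Hr ?m + s \<bullet> ?m" by (rule min[OF m])
    have Nxz: "N (x - z) = N (z - x)" by (rule isn_commute[OF N])
    have "t * ((1 - t) * Q) \<le> t * R"
      using sc lin \<open>Hr x + s \<bullet> x \<le> Hr ?m + s \<bullet> ?m\<close> Nxz unfolding Q_def R_def
      by (simp add: algebra_simps)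
    then show ?thesis using t by simp
  qed
  have "Q \<le> R"
  proof (rule ccontr)
    assume "\<not> Q \<le> R"
    hence QR: "R < Q" by simp
    have "R \<ge> Q / 2" using key[of "1/2"] by simp
    hence Qp: "Q > 0" "R \<ge> 0" using QR Q0 by linarith+
    define t where "t = (Q - R) / (2 * Q)"
    have t: "0 < t" "t < 1" unfolding t_def using Qp QR by (auto simp: field_simps)
    have "(1 - t) * Q = (Q + R) / 2" unfolding t_def using Qp by (simp add: field_simps)
    moreover have "(Q + R) / 2 > R" using QR by simp
    ultimately show False using key[OF t] by linarith
  qed
  then show ?thesis unfolding Q_def R_def by simp
qed

end



context setting begin

definition "lam = 2 * \<alpha> / (\<alpha> + sqrt (\<alpha>\<^sup>2 + 4 * L * \<alpha>))"

lemma lam_props: "0 < lam" "lam < 1" "L * lam\<^sup>2 = \<alpha> * (1 - lam)"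
proof -
  define q where "q = sqrt (\<alpha>\<^sup>2 + 4 * L * \<alpha>)"
  have q2: "q\<^sup>2 = \<alpha>\<^sup>2 + 4 * L * \<alpha>" unfolding q_def using apos Lpos by simp
  have "\<alpha>\<^sup>2 < \<alpha>\<^sup>2 + 4 * L * \<alpha>" using apos Lpos by simp
  hence qa: "\<alpha> < q" unfolding q_def using apos by (metis real_less_rsqrt)
  have l: "lam = 2 * \<alpha> / (\<alpha> + q)" unfolding lam_def q_def ..
  show "0 < lam" unfolding l using apos qa by simp
  show "lam < 1" unfolding l using apos qa by simp
  have "lam * (\<alpha> + q) = 2 * \<alpha>" unfolding l using apos qa by simp
  hence "L * lam\<^sup>2 * (\<alpha> + q)\<^sup>2 = L * (2 * \<alpha>)\<^sup>2" by (metis mult.assoc power_mult_distrib)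
  hence "L * lam\<^sup>2 * (\<alpha> + q)\<^sup>2 = 4 * L * \<alpha>\<^sup>2" by (simp add: power2_eq_square)
  moreover have "\<alpha> * (1 - lam) * (\<alpha> + q)\<^sup>2 = 4 * L * \<alpha>\<^sup>2"
  proof -
    have e1: "(1 - lam) * (\<alpha> + q) = q - \<alpha>" unfolding l using apos qa by (simp add: field_simps)
    have "\<alpha> * (1 - lam) * (\<alpha> + q)\<^sup>2 = \<alpha> * ((1 - lam) * (\<alpha> + q)) * (\<alpha> + q)"
      by (simp add: power2_eq_square mult.assoc)
    also have "\<dots> = \<alpha> * (q\<^sup>2 - \<alpha>\<^sup>2)" unfolding e1 by (simp add: power2_eq_square algebra_simps)
    also have "\<dots> = 4 * L * \<alpha>\<^sup>2" unfolding q2 by (simp add: power2_eq_square algebra_simps)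
    finally show ?thesis .
  qed
  moreover have "(\<alpha> + q)\<^sup>2 \<noteq> 0" using apos qa by simp
  ultimately show "L * lam\<^sup>2 = \<alpha> * (1 - lam)" by (metis mult_right_cancel)
qed

lemma inv_lam: "1 / lam \<le> 1 + sqrt (L / \<alpha>)"
proof -
  define q where "q = sqrt (\<alpha>\<^sup>2 + 4 * L * \<alpha>)"
  have l: "lam = 2 * \<alpha> / (\<alpha> + q)" unfolding lam_def q_def ..
  have "(\<alpha> + 2 * sqrt (L * \<alpha>))\<^sup>2 = \<alpha>\<^sup>2 + 4 * \<alpha> * sqrt (L * \<alpha>) + 4 * (L * \<alpha>)"
    using apos Lpos by (simp add: power2_eq_square algebra_simps)
  also have "\<dots> \<ge> \<alpha>\<^sup>2 + 4 * L * \<alpha>" using apos Lpos by simp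
  finally have "q \<le> \<alpha> + 2 * sqrt (L * \<alpha>)" unfolding q_def
    using apos Lpos by (intro real_le_lsqrt) auto
  moreover have "sqrt (L * \<alpha>) = \<alpha> * sqrt (L / \<alpha>)"
  proof -
    have "L * \<alpha> = \<alpha>\<^sup>2 * (L / \<alpha>)" using apos by (simp add: power2_eq_square)
    hence "sqrt (L * \<alpha>) = sqrt (\<alpha>\<^sup>2 * (L / \<alpha>))" by (rule arg_cong)
    also have "\<dots> = sqrt (\<alpha>\<^sup>2) * sqrt (L / \<alpha>)" by (rule real_sqrt_mult)
    also have "\<dots> = \<alpha> * sqrt (L / \<alpha>)" using apos by simp
    finally show ?thesis .
  qed
  ultimately have "q \<le> \<alpha> + 2 * \<alpha> * sqrt (L / \<alpha>)" by simp
  hence "(\<alpha> + q) / (2 * \<alpha>) \<le> (2 * \<alpha> + 2 * \<alpha> * sqrt (L / \<alpha>)) / (2 * \<alpha>)"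
    using apos by (intro divide_right_mono) auto
  also have "\<dots> = 1 + sqrt (L / \<alpha>)" using apos by (simp add: field_simps)
  finally show ?thesis unfolding l by simp
qed

definition "it = taa H G lam y0"
definition "xt k = fst (it k)"
definition "sk k = fst (snd (it k))"
definition "xk k = fst (snd (snd (it k)))"
definition "yk k = snd (snd (snd (it k)))"

lemma it_Suc:
  "xt (Suc k) = (1 - lam) *\<^sub>R yk k + lam *\<^sub>R xk k"
  "sk (Suc k) = (1 - lam) *\<^sub>R sk k + lam *\<^sub>R G (xt (Suc k))"
  "xk (Suc k) = lin_argmin H (sk (Suc k))"
  "yk (Suc k) = (1 - lam) *\<^sub>R yk k + lam *\<^sub>R xk (Suc k)"
  by (cases "it k"; simp add: xt_def sk_def xk_def yk_def it_def Let_def split: prod.splits)+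

lemma it_0: "sk 0 = G y0" "xk 0 = lin_argmin H (sk 0)" "yk 0 = y0"
  by (simp_all add: sk_def xk_def yk_def it_def)

lemma xk_argmin: "xk k = lin_argmin H (sk k)"
  by (cases k) (simp_all add: it_0 it_Suc)

lemma lin_argmin_prop:
  "lin_argmin H s \<in> D \<and> (\<forall>z\<in>D. Hr (lin_argmin H s) + s \<bullet> lin_argmin H s \<le> Hr z + s \<bullet> z)"
proof -
  obtain x0 where x0: "x0 \<in> D" "\<And>z. z \<in> D \<Longrightarrow> s \<bullet> x0 + Hr x0 \<le> s \<bullet> z + Hr z"
    using argmin_ex by blast
  have "\<forall>z. ereal (s \<bullet> x0) + H x0 \<le> ereal (s \<bullet> z) + H z"
  proof
    fix z show "ereal (s \<bullet> x0) + H x0 \<le> ereal (s \<bullet> z) + H z"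
      using x0 HD Hout by (cases "z \<in> D") auto
  qed
  hence P: "\<forall>z. ereal (s \<bullet> lin_argmin H s) + H (lin_argmin H s) \<le> ereal (s \<bullet> z) + H z"
    unfolding lin_argmin_def by (rule someI)
  let ?x = "lin_argmin H s"
  have "?x \<in> D"
  proof (rule ccontr)
    assume "?x \<notin> D"
    then show False using P[rule_format, of y0] Hout HD[OF y0] by simp
  qed
  moreover have "\<forall>z\<in>D. Hr ?x + s \<bullet> ?x \<le> Hr z + s \<bullet> z"
  proof
    fix z assume z: "z \<in> D"
    have "ereal (s \<bullet> ?x) + H ?x \<le> ereal (s \<bullet> z) + H z" using P by blast
    then show "Hr ?x + s \<bullet> ?x \<le> Hr z + s \<bullet> z" using HD[OF z] HD[OF \<open>?x \<in> D\<close>] by simp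
  qed
  ultimately show ?thesis by blast
qed

abbreviation "\<Gamma> \<equiv> acp H f G y0 (\<lambda>i. xt (Suc i)) (\<lambda>_. lam)"

lemma acp_rep: "\<exists>a. \<forall>z. \<Gamma> k z = H z + ereal (a + sk k \<bullet> z)"
proof (induction k)
  case 0
  show ?case
    by (rule exI[of _ "f y0 - G y0 \<bullet> y0"]) (simp add: lin_def it_0 inner_diff_right algebra_simps)
next
  case (Suc k)
  then obtain a where a: "\<And>z. \<Gamma> k z = H z + ereal (a + sk k \<bullet> z)" by blast
  define p where "p = xt (Suc k)"
  show ?case
  proof (rule exI[of _ "(1 - lam) * a + lam * (f p - G p \<bullet> p)"], rule allI)
    fix z
    have l: "0 < lam" "lam < 1" using lam_props by auto
    show "\<Gamma> (Suc k) z = H z + ereal ((1 - lam) * a + lam * (f p - G p \<bullet> p) + sk (Suc k) \<bullet> z)"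
    proof (cases "z \<in> D")
      case True
      have e1: "\<Gamma> (Suc k) z = ereal ((1 - lam) * (Hr z + (a + sk k \<bullet> z)) + lam * (Hr z + lin f G p z))"
        using a[of z] HD[OF True] unfolding p_def by simp
      have e2: "(1 - lam) * (Hr z + (a + sk k \<bullet> z)) + lam * (Hr z + lin f G p z)
          = Hr z + ((1 - lam) * a + lam * (f p - G p \<bullet> p) + sk (Suc k) \<bullet> z)"
      proof -
        have "sk (Suc k) \<bullet> z = (1 - lam) * (sk k \<bullet> z) + lam * (G p \<bullet> z)"
          unfolding it_Suc(2) p_def by (simp add: inner_add_left)
        then show ?thesis unfolding lin_def by (simp add: inner_diff_right algebra_simps)
      qed
      show ?thesis unfolding e1 e2 HD[OF True] by simp
    next
      case False
      then show ?thesis using a[of z] Hout[OF False] l by simp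
    qed
  qed
qed

end



context setting begin

definition "ak = (SOME a. \<forall>k z. \<Gamma> k z = H z + ereal (a k + sk k \<bullet> z))"

lemma ak_rep: "\<Gamma> k z = H z + ereal (ak k + sk k \<bullet> z)"
proof -
  have "\<exists>a. \<forall>k z. \<Gamma> k z = H z + ereal (a k + sk k \<bullet> z)"
    using acp_rep by metis
  hence "\<forall>k z. \<Gamma> k z = H z + ereal (ak k + sk k \<bullet> z)" unfolding ak_def by (rule someI_ex)
  then show ?thesis by blast
qed

lemma lam01: "0 \<le> lam" "lam \<le> 1" using lam_props by auto

lemma xD: "xk k \<in> D" using lin_argmin_prop xk_argmin by metis
lemma xmin: "z \<in> D \<Longrightarrow> Hr (xk k) + sk k \<bullet> xk k \<le> Hr z + sk k \<bullet> z"
  using lin_argmin_prop xk_argmin by metis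

lemma yD: "yk k \<in> D"
proof (induction k)
  case 0 then show ?case using y0 it_0 by simp
next
  case (Suc k) then show ?case unfolding it_Suc(4) using comb_D(1)[OF Suc xD lam01] by simp
qed

definition "mk k = Hr (xk k) + ak k + sk k \<bullet> xk k"
definition "Dk k = f (yk k) + Hr (yk k) - mk k"

lemma a_rel:
  assumes z: "z \<in> D"
  shows "ak (Suc k) + sk (Suc k) \<bullet> z = (1 - lam) * (ak k + sk k \<bullet> z) + lam * lin f G (xt (Suc k)) z"
proof -
  have "\<Gamma> (Suc k) z = ereal (1 - lam) * \<Gamma> k z + ereal lam * (H z + ereal (lin f G (xt (Suc k)) z))"
    by simp
  hence "ereal (Hr z + (ak (Suc k) + sk (Suc k) \<bullet> z)) =
      ereal ((1 - lam) * (Hr z + (ak k + sk k \<bullet> z)) + lam * (Hr z + lin f G (xt (Suc k)) z))"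
    unfolding ak_rep HD[OF z] by simp
  hence "Hr z + (ak (Suc k) + sk (Suc k) \<bullet> z) =
      (1 - lam) * (Hr z + (ak k + sk k \<bullet> z)) + lam * (Hr z + lin f G (xt (Suc k)) z)" by simp
  then show ?thesis by (simp add: algebra_simps)
qed

lemma step: "Dk (Suc k) \<le> (1 - lam) * Dk k"
proof -
  define y where "y = yk k"
  define x where "x = xk k"
  define s where "s = sk k"
  define p where "p = xt (Suc k)"
  define x' where "x' = xk (Suc k)"
  define y' where "y' = yk (Suc k)"
  have yD': "y \<in> D" "x \<in> D" "x' \<in> D" unfolding y_def x_def x'_def using yD xD by auto
  have p: "p = (1 - lam) *\<^sub>R y + lam *\<^sub>R x" unfolding p_def y_def x_def by (rule it_Suc(1))
  have y': "y' = (1 - lam) *\<^sub>R y + lam *\<^sub>R x'" unfolding y'_def y_def x'_def by (rule it_Suc(4))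
  have F1: "f y' \<le> f p + G p \<bullet> (y' - p) + L / 2 * (N (y' - p))\<^sup>2"
    by (rule descent[OF N sm]) (use Lpos df in auto)
  have F2: "f p + G p \<bullet> (y - p) \<le> f y" by (rule tangent[OF cvx df])
  have F3: "Hr y' \<le> (1 - lam) * Hr y + lam * Hr x'"
  proof -
    have "Hr y' + \<alpha> * (lam * (1 - lam) / 2 * (N (y - x'))\<^sup>2) \<le> (1 - lam) * Hr y + lam * Hr x'"
      unfolding y' by (rule Hr_sc[OF yD'(1) yD'(3) lam01])
    moreover have "\<alpha> * (lam * (1 - lam) / 2 * (N (y - x'))\<^sup>2) \<ge> 0"
      using apos lam01 by simp
    ultimately show ?thesis by linarith
  qed
  have F4: "Hr x + s \<bullet> x + \<alpha> / 2 * (N (x' - x))\<^sup>2 \<le> Hr x' + s \<bullet> x'"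
    unfolding s_def x_def by (rule growth[OF xD[of k] xmin yD'(3)])
  have F5: "N (y' - p) = lam * N (x' - x)"
  proof -
    have "y' - p = lam *\<^sub>R (x' - x)" unfolding y' p by (simp add: algebra_simps)
    then show ?thesis using isn_scale[OF N] lam01 by simp
  qed
  have F6: "L / 2 * (N (y' - p))\<^sup>2 = (1 - lam) * (\<alpha> / 2 * (N (x' - x))\<^sup>2)"
  proof -
    have "L / 2 * (lam * N (x' - x))\<^sup>2 = (L * lam\<^sup>2) * (N (x' - x))\<^sup>2 / 2"
      by (simp add: power_mult_distrib)
    also have "\<dots> = \<alpha> * (1 - lam) * (N (x' - x))\<^sup>2 / 2" by (simp only: lam_props(3))
    finally show ?thesis unfolding F5 by simp
  qed
  have F7: "ak (Suc k) + sk (Suc k) \<bullet> x' = (1 - lam) * (ak k + s \<bullet> x') + lam * (f p + G p \<bullet> (x' - p))"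
    using a_rel[OF yD'(3)] unfolding s_def p_def lin_def by simp
  have F8: "G p \<bullet> (y' - p) = (1 - lam) * (G p \<bullet> (y - p)) + lam * (G p \<bullet> (x' - p))"
  proof -
    have "y' - p = (1 - lam) *\<^sub>R (y - p) + lam *\<^sub>R (x' - p)" unfolding y' by (simp add: algebra_simps)
    then show ?thesis by (simp add: inner_add_right)
  qed
  have M2: "(1 - lam) * (f p + G p \<bullet> (y - p)) \<le> (1 - lam) * f y"
    using F2 lam01 by (intro mult_left_mono) auto
  have M4: "(1 - lam) * (Hr x + s \<bullet> x + \<alpha> / 2 * (N (x' - x))\<^sup>2) \<le> (1 - lam) * (Hr x' + s \<bullet> x')"
    using F4 lam01 by (intro mult_left_mono) auto
  have "Dk (Suc k) = f y' + Hr y' - (Hr x' + ak (Suc k) + sk (Suc k) \<bullet> x')"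
    unfolding Dk_def mk_def y'_def x'_def ..
  also have "\<dots> \<le> (1 - lam) * (f y + Hr y - (Hr x + ak k + s \<bullet> x))"
    using F1 F3 F6 F7 F8 M2 M4 apply (simp add: algebra_simps) by (smt (verit))
  also have "\<dots> = (1 - lam) * Dk k" unfolding Dk_def mk_def y_def x_def s_def ..
  finally show ?thesis .
qed

end



context setting begin

lemma Dk_pow: "Dk k \<le> (1 - lam) ^ k * Dk 0"
proof (induction k)
  case 0 then show ?case by simp
next
  case (Suc k)
  have "Dk (Suc k) \<le> (1 - lam) * Dk k" by (rule step)
  also have "\<dots> \<le> (1 - lam) * ((1 - lam) ^ k * Dk 0)"
    using Suc lam01 by (intro mult_left_mono) auto
  finally show ?case by simp
qed

lemma INF_Gamma: "(INF z. \<Gamma> k z) = ereal (mk k)"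
proof (rule antisym)
  have "\<Gamma> k (xk k) = ereal (mk k)" unfolding ak_rep HD[OF xD] mk_def by simp
  then show "(INF z. \<Gamma> k z) \<le> ereal (mk k)" by (metis INF_lower UNIV_I)
next
  show "ereal (mk k) \<le> (INF z. \<Gamma> k z)"
  proof (rule INF_greatest)
    fix z
    show "ereal (mk k) \<le> \<Gamma> k z"
    proof (cases "z \<in> D")
      case True
      then show ?thesis unfolding ak_rep HD[OF True] mk_def using xmin[OF True, of k] by simp
    next
      case False
      then show ?thesis unfolding ak_rep Hout[OF False] by simp
    qed
  qed
qed

lemma phi_y: "phialpha f h w \<alpha> (yk k) = ereal (f (yk k) + Hr (yk k))"
  unfolding phialpha_def HD[OF yD] by simp

lemma final_num:
  assumes e: "\<epsilon> > 0" and B: "1 / lam \<le> B" and k: "B * (1 + ln (1 + Dk 0 / \<epsilon>)) \<le> real k"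
  shows "Dk k \<le> \<epsilon> / 2"
proof (cases "Dk 0 \<le> 0")
  case True
  have "(1 - lam) ^ k * Dk 0 \<le> 0" using True lam01 by (intro mult_nonneg_nonpos) auto
  then show ?thesis using Dk_pow[of k] e by linarith
next
  case False
  define g where "g = Dk 0"
  have g: "g > 0" using False g_def by simp
  have l: "0 < lam" "lam < 1" using lam_props by auto
  define X where "X = 1 + ln (1 + g / \<epsilon>)"
  have lnpos: "0 \<le> ln (1 + g / \<epsilon>)" using g e by (intro ln_ge_zero) auto
  have "1 / lam * X \<le> B * X" using B lnpos unfolding X_def by (intro mult_right_mono) auto
  hence "1 / lam * X \<le> real k" using k unfolding X_def g_def by linarith
  hence Xk: "X \<le> lam * real k" using l by (simp add: field_simps)
  have "ln (2 * (1 + g / \<epsilon>)) = ln 2 + ln (1 + g / \<epsilon>)"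
  proof -
    have "1 + g / \<epsilon> > 0" using g e by (simp add: add_pos_pos)
    then show ?thesis by (subst ln_mult) auto
  qed
  hence lnk: "ln (2 * (1 + g / \<epsilon>)) \<le> lam * real k" using ln_2_less_1 Xk unfolding X_def by linarith
  have "(1 - lam) ^ k \<le> exp (- lam) ^ k"
    using l exp_ge_add_one_self[of "- lam"] by (intro power_mono) auto
  also have "\<dots> = exp (- (lam * real k))" using exp_of_nat_mult[of k "- lam"] by (simp add: mult.commute)
  also have "\<dots> \<le> exp (- ln (2 * (1 + g / \<epsilon>)))" using lnk by simp
  also have "\<dots> = 1 / (2 * (1 + g / \<epsilon>))"
    using g e by (subst exp_minus, subst exp_ln) (auto simp: add_pos_pos field_simps)
  finally have pk: "(1 - lam) ^ k \<le> 1 / (2 * (1 + g / \<epsilon>))" .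
  have "Dk k \<le> (1 - lam) ^ k * g" using Dk_pow g_def by simp
  also have "\<dots> \<le> 1 / (2 * (1 + g / \<epsilon>)) * g" using pk g by (intro mult_right_mono) auto
  also have "\<dots> = \<epsilon> / 2 * (g / (\<epsilon> + g))" using g e by (simp add: field_simps)
  also have "\<dots> \<le> \<epsilon> / 2 * 1" using g e by (intro mult_left_mono) auto
  finally show ?thesis by simp
qed

lemma main_result:
  assumes e: "\<epsilon> > 0" and a: "\<alpha> = \<epsilon> / (2 * M)" and M: "M > 0"
    and k: "2 * (1 + sqrt (M * L / \<epsilon>)) *
        (1 + ln (1 + real_of_ereal (phialpha f h w \<alpha> y0 - (INF x. \<Gamma> 0 x)) / \<epsilon>)) ^ 1 \<le> real k"
  shows "eps_certificate f h w M \<alpha> \<epsilon> (yk k) (\<Gamma> k)"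
proof -
  have gap: "real_of_ereal (phialpha f h w \<alpha> y0 - (INF x. \<Gamma> 0 x)) = Dk 0"
    using phi_y[of 0] unfolding INF_Gamma it_0 Dk_def by simp
  have "1 / lam \<le> 1 + sqrt (L / \<alpha>)" by (rule inv_lam)
  also have "L / \<alpha> = 2 * (M * L / \<epsilon>)" unfolding a using e M by (simp add: field_simps)
  also have "sqrt (2 * (M * L / \<epsilon>)) \<le> 2 * sqrt (M * L / \<epsilon>)"
  proof -
    have "sqrt (2 * (M * L / \<epsilon>)) = sqrt 2 * sqrt (M * L / \<epsilon>)" by (rule real_sqrt_mult)
    moreover have "sqrt 2 \<le> (2::real)" by (rule real_le_lsqrt) auto
    moreover have "sqrt (M * L / \<epsilon>) \<ge> 0" using M e Lpos by simp
    ultimately show ?thesis by (metis mult_right_mono)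
  qed
  hence "1 + sqrt (2 * (M * L / \<epsilon>)) \<le> 2 * (1 + sqrt (M * L / \<epsilon>))" by simp
  finally have B: "1 / lam \<le> 2 * (1 + sqrt (M * L / \<epsilon>))" by simp
  have "Dk k \<le> \<epsilon> / 2" by (rule final_num[OF e B]) (use k gap in simp)
  then have "phialpha f h w \<alpha> (yk k) - (INF x. \<Gamma> k x) \<le> ereal (\<epsilon> / 2)"
    unfolding phi_y INF_Gamma Dk_def by simp
  then show ?thesis unfolding eps_certificate_def using yD a by simp
qed

end


theorem theorem5p1:
  shows "\<exists>C > 0. \<exists>c::nat. \<forall>(N :: 'a::euclidean_space \<Rightarrow> real) (f :: 'a \<Rightarrow> real) (G :: 'a \<Rightarrow> 'a)
      (h :: 'a \<Rightarrow> ereal) (w :: 'a \<Rightarrow> ereal) (L::real) (M::real) (\<epsilon>::real) (y0::'a) (k::nat).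
    is_norm N \<and> convex_on UNIV f \<and> (\<forall>x. (f has_derivative (\<lambda>v. G x \<bullet> v)) (at x))
    \<and> L > 0 \<and> L_smooth_wrt N L G
    \<and> eclosed h \<and> eproper h \<and> econvex h \<and> bounded (edom h)
    \<and> (\<forall>x. 0 \<le> w x) \<and> eclosed w \<and> strongly_convex_wrt_on (edom h) N w
    \<and> (\<exists>x\<in>edom h. w x = ereal M) \<and> (\<forall>x\<in>edom h. w x \<le> ereal M) \<and> M > 0
    \<and> \<epsilon> > 0 \<and> y0 \<in> edom h
    \<longrightarrow>
    (let \<alpha> = \<epsilon> / (2 * M);
         lam = 2 * \<alpha> / (\<alpha> + sqrt (\<alpha>\<^sup>2 + 4 * L * \<alpha>));
         H = halpha h w \<alpha>;
         it = taa H G lam y0;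
         \<Gamma> = acp H f G y0 (\<lambda>i. fst (it (Suc i))) (\<lambda>_. lam);
         gap0 = real_of_ereal (phialpha f h w \<alpha> y0 - (INF x. \<Gamma> 0 x))
     in real k \<ge> C * (1 + sqrt (M * L / \<epsilon>)) * (1 + ln (1 + gap0 / \<epsilon>)) ^ c \<longrightarrow>
        eps_certificate f h w M \<alpha> \<epsilon> (snd (snd (snd (it k)))) (\<Gamma> k))"
  apply (intro exI[of _ "2::real"] conjI exI[of _ "1::nat"] allI impI)
   apply simp
  subgoal premises A for N f G h w L M \<epsilon> y0 k
  proof -
    have s: "setting N f G h w L M (\<epsilon> / (2 * M)) y0"
      by unfold_locales (use A in auto)
    interpret S: setting N f G h w L M "\<epsilon> / (2 * M)" y0 by (rule s)
    show ?thesis unfolding Let_def S.lam_def[symmetric] S.it_def[symmetric]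
      by (intro impI S.main_result[unfolded S.yk_def S.xt_def]) (use A in auto)
  qed
  done

end
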